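(* Let $\partial$ be an intrinsic dimension function (in the sense defined in the context), and let $(X,d,\mu)$ be a space with metric and measure such that the support of $\mu$ is all of $X$. Then $\partial(X)=+\infty$ if and only if $X$ is a singleton, $X\simeq\{\ast\}$.
   Context: A space with metric and measure is a triple $(X,d,\mu)$ where $(X,d)$ is a metric space and $\mu$ is a (Borel) probability measure on $X$. A feature is a $1$-Lipschitz function $f\colon X\to\mathbb R$, i.e. $|f(x)-f(y)|\le d(x,y)$; $\mathcal{L}ip_1(X)$ denotes the set of all of them. For such $f$, $M_f$ denotes a median: $\mu\{f\ge M_f\}\ge 1/2$ and $\mu\{f\le M_f\}\ge 1/2$. The concentration function of $X$ is $\alpha_X(0)=1/2$ and, for $\varepsilon>0$, $\alpha_X(\varepsilon)=\sup_{f\in\mathcal{L}ip_1(X)}\mu\{x: f(x)\ge M_f+\varepsilon\}$ (equivalently $1-\inf\{\mu(A_\varepsilon):\mu(A)\ge 1/2\}$, where $A_\varepsilon$ is the open $\varepsilon$-neighbourhood of $A$). A sequence $(X_n)$ of spaces with metric and measure is a Lévy family if $\alpha_{X_n}(\varepsilon)\to 0$ for every $\varepsilon>0$. Gromov distance: a parametrization of $(X,\mu)$ is a map $\phi\colon[0,1]\to X$ such that $\mu(A)$ equals the Lebesgue measure of $\phi^{-1}(A)$ for all (measurable) $A\subseteq X$. On measurable functions on $[0,1]$ use the metric of convergence in measure $\mathrm{me}_1(f,g)=\inf\{\varepsilon>0: \lambda\{t:|f(t)-g(t)|>\varepsilon\}<\varepsilon\}$ ($\lambda$ = Lebesgue measure).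 The Gromov distance $d_{conc}(X,Y)$ is the infimum, over all parametrizations $\phi$ of $X$ and $\psi$ of $Y$, of the Hausdorff distance (with respect to $\mathrm{me}_1$) between $\{f\circ\phi: f\in\mathcal{L}ip_1(X)\}$ and $\{g\circ\psi: g\in\mathcal{L}ip_1(Y)\}$. An intrinsic dimension function is a function $\partial$ assigning to every space with metric and measure a value in $[0,\infty)\cup\{+\infty\}$ and satisfying: (Axiom 1, concentration) for every sequence $(X_n)$ of spaces with metric and measure, $\partial(X_n)\uparrow\infty$ if and only if $(X_n)$ is a Lévy family; (Axiom 2, smooth dependence) if $d_{conc}(X_n,X)\to 0$ then $\partial(X_n)\to\partial(X)$; (Axiom 3, normalization) $\partial(\mathbb S^n)=\Theta(n)$, where $\mathbb S^n$ is the unit sphere in $\mathbb R^{n+1}$ with the Euclidean distance and the rotation-invariant probability measure. *)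

theory Defs
  imports "HOL-Analysis.Analysis" "HOL-Probability.Probability"
begin

type_synonym 'a mmspace = "'a metric \<times> 'a measure"

definition borel_sets_of :: "'a metric \<Rightarrow> 'a set set" where
  "borel_sets_of m = sigma_sets (mspace m) {U. openin (mtopology_of m) U}"

definition mm_space :: "'a mmspace \<Rightarrow> bool" where
  "mm_space X \<longleftrightarrow> prob_space (snd X) \<and> space (snd X) = mspace (fst X)
     \<and> sets (snd X) = borel_sets_of (fst X)"

definition Lip1 :: "'a metric \<Rightarrow> ('a \<Rightarrow> real) set" where
  "Lip1 m = {f. \<forall>x\<in>mspace m. \<forall>y\<in>mspace m. \<bar>f x - f y\<bar> \<le> mdist m x y}"

definition is_median :: "'a mmspace \<Rightarrow> ('a \<Rightarrow> real) \<Rightarrow> real \<Rightarrow> bool" where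
  "is_median X f M \<longleftrightarrow>
     measure (snd X) {x \<in> mspace (fst X). f x \<ge> M} \<ge> 1/2 \<and>
     measure (snd X) {x \<in> mspace (fst X). f x \<le> M} \<ge> 1/2"

definition conc_fun :: "'a mmspace \<Rightarrow> real \<Rightarrow> real" where
  "conc_fun X \<epsilon> = (if \<epsilon> = 0 then 1/2 else
     Sup {measure (snd X) {x \<in> mspace (fst X). f x \<ge> M + \<epsilon>} | f M.
            f \<in> Lip1 (fst X) \<and> is_median X f M})"

definition levy_family :: "(nat \<Rightarrow> 'a mmspace) \<Rightarrow> bool" where
  "levy_family Xs \<longleftrightarrow> (\<forall>\<epsilon>>0. (\<lambda>n. conc_fun (Xs n) \<epsilon>) \<longlonglongrightarrow> 0)"

definition parametrization :: "'a mmspace \<Rightarrow> (real \<Rightarrow> 'a) \<Rightarrow> bool" where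
  "parametrization X \<phi> \<longleftrightarrow> (\<forall>t\<in>{0..1}. \<phi> t \<in> mspace (fst X)) \<and>
     (\<forall>A\<in>sets (snd X). \<phi> -` A \<inter> {0..1} \<in> sets lebesgue \<and>
        measure lebesgue (\<phi> -` A \<inter> {0..1}) = measure (snd X) A)"

(* metric of convergence in measure on functions on [0,1] *)
definition me1 :: "(real \<Rightarrow> real) \<Rightarrow> (real \<Rightarrow> real) \<Rightarrow> real" where
  "me1 f g = Inf {\<epsilon>. \<epsilon> > 0 \<and> measure lebesgue {t \<in> {0..1}. \<bar>f t - g t\<bar> > \<epsilon>} < \<epsilon>}"

definition hausdorff_me1 :: "(real \<Rightarrow> real) set \<Rightarrow> (real \<Rightarrow> real) set \<Rightarrow> real" where
  "hausdorff_me1 F G = max (SUP f\<in>F. INF g\<in>G. me1 f g) (SUP g\<in>G. INF f\<in>F. me1 f g)"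

(* Gromov distance (infimum over the empty set is \<infinity>) *)
definition d_conc :: "'a mmspace \<Rightarrow> 'a mmspace \<Rightarrow> ennreal" where
  "d_conc X Y = (INF \<phi>\<psi> \<in> {(\<phi>, \<psi>). parametrization X \<phi> \<and> parametrization Y \<psi>}.
      ennreal (hausdorff_me1 ((\<lambda>f. f \<circ> fst \<phi>\<psi>) ` Lip1 (fst X))
                             ((\<lambda>g. g \<circ> snd \<phi>\<psi>) ` Lip1 (fst Y))))"

(* the unit sphere S^n in R^(n+1), with R^(n+1) embedded in nat => real *)
definition sphere_set :: "nat \<Rightarrow> (nat \<Rightarrow> real) set" where
  "sphere_set n = {x. (\<forall>i>n. x i = 0) \<and> (\<Sum>i\<le>n. (x i)\<^sup>2) = 1}"

definition eucl_dist :: "nat \<Rightarrow> (nat \<Rightarrow> real) \<Rightarrow> (nat \<Rightarrow> real) \<Rightarrow> real" where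
  "eucl_dist n x y = sqrt (\<Sum>i\<le>n. (x i - y i)\<^sup>2)"

definition is_sphere_space :: "nat \<Rightarrow> 'a mmspace \<Rightarrow> bool" where
  "is_sphere_space n X \<longleftrightarrow> mm_space X \<and>
     (\<exists>h. bij_betw h (mspace (fst X)) (sphere_set n) \<and>
          (\<forall>x\<in>mspace (fst X). \<forall>y\<in>mspace (fst X). eucl_dist n (h x) (h y) = mdist (fst X) x y)) \<and>
     (\<forall>g. bij_betw g (mspace (fst X)) (mspace (fst X)) \<and>
          (\<forall>x\<in>mspace (fst X). \<forall>y\<in>mspace (fst X). mdist (fst X) (g x) (g y) = mdist (fst X) x y)
        \<longrightarrow> (\<forall>A\<in>sets (snd X). measure (snd X) (g -` A \<inter> mspace (fst X)) = measure (snd X) A))"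

definition intrinsic_dimension_function :: "('a mmspace \<Rightarrow> ennreal) \<Rightarrow> bool" where
  "intrinsic_dimension_function idim \<longleftrightarrow>
     (\<forall>Xs. (\<forall>n. mm_space (Xs n)) \<longrightarrow>
        (((\<lambda>n. idim (Xs n)) \<longlonglongrightarrow> \<infinity>) \<longleftrightarrow> levy_family Xs)) \<and>
     (\<forall>Xs Y. (\<forall>n. mm_space (Xs n)) \<and> mm_space Y \<and> (\<lambda>n. d_conc (Xs n) Y) \<longlonglongrightarrow> 0
        \<longrightarrow> (\<lambda>n. idim (Xs n)) \<longlonglongrightarrow> idim Y) \<and>
     (\<exists>c C N. c > 0 \<and> C > 0 \<and> (\<forall>n\<ge>N. \<forall>X. is_sphere_space n X \<longrightarrow>
        ennreal (c * real n) \<le> idim X \<and> idim X \<le> ennreal (C * real n)))"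

definition full_support :: "'a mmspace \<Rightarrow> bool" where
  "full_support X \<longleftrightarrow> (\<forall>x\<in>mspace (fst X). \<forall>r>0. measure (snd X) (mball_of (fst X) x r) > 0)"

end

theory Submission
  imports Defs
begin

lemma Lip1_open_lt:
  assumes "f \<in> Lip1 m"
  shows "openin (mtopology_of m) {x\<in>mspace m. f x < c}"
proof -
  interpret Metric_space "mspace m" "mdist m" by simp
  have "openin mtopology {x\<in>mspace m. f x < c}"
    unfolding openin_mtopology
  proof (intro conjI allI impI)
    fix x assume x: "x \<in> {x\<in>mspace m. f x < c}"
    show "\<exists>r>0. mball x r \<subseteq> {x\<in>mspace m. f x < c}"
    proof (intro exI conjI)
      show "c - f x > 0" using x by auto
      show "mball x (c - f x) \<subseteq> {x\<in>mspace m. f x < c}"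
      proof
        fix y assume y: "y \<in> mball x (c - f x)"
        then have "\<bar>f x - f y\<bar> \<le> mdist m x y" using assms x unfolding Lip1_def by auto
        then show "y \<in> {x\<in>mspace m. f x < c}" using y by auto
      qed
    qed
  qed auto
  then show ?thesis by (simp add: mtopology_of_def)
qed

lemma Lip1_uminus: "f \<in> Lip1 m \<Longrightarrow> (\<lambda>x. - f x) \<in> Lip1 m"
  unfolding Lip1_def by (auto simp: abs_minus_commute)

lemma Lip1_meas:
  assumes X: "mm_space X" and f: "f \<in> Lip1 (fst X)"
  shows "{x\<in>mspace (fst X). f x < c} \<in> sets (snd X)"
    and "{x\<in>mspace (fst X). f x \<ge> c} \<in> sets (snd X)"
    and "{x\<in>mspace (fst X). f x > c} \<in> sets (snd X)"
    and "{x\<in>mspace (fst X). f x \<le> c} \<in> sets (snd X)"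
proof -
  have S: "sets (snd X) = sigma_sets (mspace (fst X)) {U. openin (mtopology_of (fst X)) U}"
    using X by (simp add: mm_space_def borel_sets_of_def)
  show 1: "{x\<in>mspace (fst X). f x < c} \<in> sets (snd X)" for c
    unfolding S using Lip1_open_lt[OF f] by (auto intro: sigma_sets.Basic)
  have f': "(\<lambda>x. - f x) \<in> Lip1 (fst X)" using Lip1_uminus[OF f] .
  show 3: "{x\<in>mspace (fst X). f x > c} \<in> sets (snd X)" for c
  proof -
    have "openin (mtopology_of (fst X)) {x\<in>mspace (fst X). - f x < - c}"
      using Lip1_open_lt[OF f'] .
    moreover have "{x\<in>mspace (fst X). - f x < - c} = {x\<in>mspace (fst X). f x > c}" by auto
    ultimately show ?thesis unfolding S by (auto intro: sigma_sets.Basic)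
  qed
  have "mspace (fst X) - {x\<in>mspace (fst X). f x < c} \<in> sets (snd X)"
    using 1[of c] unfolding S by (rule sigma_sets.Compl)
  moreover have "mspace (fst X) - {x\<in>mspace (fst X). f x < c} = {x\<in>mspace (fst X). f x \<ge> c}" by auto
  ultimately show "{x\<in>mspace (fst X). f x \<ge> c} \<in> sets (snd X)" by simp
  have "mspace (fst X) - {x\<in>mspace (fst X). f x > c} \<in> sets (snd X)"
    using 3[of c] unfolding S by (rule sigma_sets.Compl)
  moreover have "mspace (fst X) - {x\<in>mspace (fst X). f x > c} = {x\<in>mspace (fst X). f x \<le> c}" by auto
  ultimately show "{x\<in>mspace (fst X). f x \<le> c} \<in> sets (snd X)" by simp
qed


lemma median_exists:
  assumes X: "mm_space X" and f: "f \<in> Lip1 (fst X)"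
  shows "\<exists>M. is_median X f M"
proof -
  define S where "S = mspace (fst X)"
  define \<mu> where "\<mu> = snd X"
  interpret prob_space \<mu> using X by (simp add: mm_space_def \<mu>_def)
  have sp: "space \<mu> = S" using X by (simp add: mm_space_def \<mu>_def S_def)
  have le: "{x\<in>S. f x \<le> c} \<in> sets \<mu>" for c using Lip1_meas(4)[OF X f] by (simp add: S_def \<mu>_def)
  have lt: "{x\<in>S. f x < c} \<in> sets \<mu>" for c using Lip1_meas(1)[OF X f] by (simp add: S_def \<mu>_def)
  define F where "F t = measure \<mu> {x\<in>S. f x \<le> t}" for t
  have Fmono: "F s \<le> F t" if "s \<le> t" for s t
    unfolding F_def using that by (intro finite_measure_mono le) auto
  define T where "T = {t. F t \<ge> 1/2}"
  have "(\<lambda>n. F (real n)) \<longlonglongrightarrow> measure \<mu> (\<Union>n. {x\<in>S. f x \<le> real n})"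
    unfolding F_def by (intro finite_Lim_measure_incseq) (auto simp: incseq_def le)
  moreover have "(\<Union>n. {x\<in>S. f x \<le> real n}) = S"
    using real_arch_simple by auto
  ultimately have "(\<lambda>n. F (real n)) \<longlonglongrightarrow> 1" using prob_space sp by simp
  then have "eventually (\<lambda>n. F (real n) > 1/2) sequentially"
    by (rule order_tendstoD) simp
  then obtain n1 where "F (real n1) > 1/2" by (auto dest: eventually_happens)
  then have Tne: "T \<noteq> {}" unfolding T_def by (metis (mono_tags, lifting) empty_iff less_eq_real_def mem_Collect_eq)
  have "(\<lambda>n. F (- real n)) \<longlonglongrightarrow> measure \<mu> (\<Inter>n. {x\<in>S. f x \<le> - real n})"
    unfolding F_def by (intro finite_Lim_measure_decseq) (auto simp: decseq_def le)
  moreover have "(\<Inter>n. {x\<in>S. f x \<le> - real n}) = {}"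
  proof -
    have "\<exists>n. f x > - real n" for x
    proof -
      obtain n where "real n \<ge> - f x + 1" using real_arch_simple by blast
      then show ?thesis by (intro exI[of _ n]) simp
    qed
    then show ?thesis by (auto simp: not_le[symmetric])
  qed
  ultimately have "(\<lambda>n. F (- real n)) \<longlonglongrightarrow> 0" by simp
  then have "eventually (\<lambda>n. F (- real n) < 1/2) sequentially"
    by (rule order_tendstoD) simp
  then obtain n2 where n2: "F (- real n2) < 1/2" by (auto dest: eventually_happens)
  have Tbdd: "bdd_below T"
  proof (rule bdd_belowI)
    fix t assume "t \<in> T"
    then have "F t \<ge> 1/2" by (simp add: T_def)
    then show "- real n2 \<le> t" using Fmono[of t "- real n2"] n2 by (cases "t \<le> - real n2") auto
  qed
  define M where "M = Inf T"
  have FM: "F M \<ge> 1/2"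
  proof -
    have "(\<lambda>n. F (M + 1 / Suc n)) \<longlonglongrightarrow> measure \<mu> (\<Inter>n. {x\<in>S. f x \<le> M + 1 / Suc n})"
      unfolding F_def
    proof (intro finite_Lim_measure_decseq)
      show "decseq (\<lambda>n. {x \<in> S. f x \<le> M + 1 / real (Suc n)})"
        unfolding decseq_def
      proof (intro allI impI subsetI)
        fix m n x assume "m \<le> n" "x \<in> {x \<in> S. f x \<le> M + 1 / real (Suc n)}"
        moreover have "1 / real (Suc n) \<le> 1 / real (Suc m)"
          using \<open>m \<le> n\<close> by (intro divide_left_mono) auto
        ultimately show "x \<in> {x \<in> S. f x \<le> M + 1 / real (Suc m)}" by auto
      qed
    qed (auto simp: le)
    moreover have "(\<Inter>n. {x\<in>S. f x \<le> M + 1 / Suc n}) = {x\<in>S. f x \<le> M}"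
    proof (auto)
      fix x assume x: "\<forall>n. f x \<le> M + 1 / (1 + real n)"
      show "f x \<le> M"
      proof (rule ccontr)
        assume "\<not> f x \<le> M"
        then obtain n where "1 / (1 + real n) < f x - M"
          using reals_Archimedean[of "f x - M"] by (auto simp: add.commute inverse_eq_divide)
        with x[rule_format, of n] show False by linarith
      qed
    next
      fix x n assume "f x \<le> M" then show "f x \<le> M + 1 / (1 + real n)"
        by (smt (verit) divide_nonneg_nonneg of_nat_0_le_iff)
    qed
    moreover have "F (M + 1 / Suc n) \<ge> 1/2" for n
    proof -
      have "\<exists>t\<in>T. t < M + 1 / Suc n"
        using cInf_lessD[OF Tne, of "M + 1 / Suc n"] by (simp add: M_def)
      then obtain t where "t \<in> T" "t < M + 1 / Suc n" by blast
      then show ?thesis using Fmono[of t "M + 1 / Suc n"] by (simp add: T_def)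
    qed
    ultimately show ?thesis
      by (intro LIMSEQ_le_const[of "\<lambda>n. F (M + 1 / Suc n)"]) (auto simp: F_def)
  qed
  have "measure \<mu> {x\<in>S. f x < M} \<le> 1/2"
  proof -
    have "(\<lambda>n. F (M - 1 / Suc n)) \<longlonglongrightarrow> measure \<mu> (\<Union>n. {x\<in>S. f x \<le> M - 1 / Suc n})"
      unfolding F_def
    proof (intro finite_Lim_measure_incseq)
      show "incseq (\<lambda>n. {x \<in> S. f x \<le> M - 1 / real (Suc n)})"
        unfolding incseq_def
      proof (intro allI impI subsetI)
        fix m n x assume "m \<le> n" "x \<in> {x \<in> S. f x \<le> M - 1 / real (Suc m)}"
        moreover have "1 / real (Suc n) \<le> 1 / real (Suc m)"
          using \<open>m \<le> n\<close> by (intro divide_left_mono) auto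
        ultimately show "x \<in> {x \<in> S. f x \<le> M - 1 / real (Suc n)}" by auto
      qed
    qed (auto simp: le)
    moreover have "(\<Union>n. {x\<in>S. f x \<le> M - 1 / Suc n}) = {x\<in>S. f x < M}"
    proof (auto)
      fix x n assume "f x \<le> M - 1 / (1 + real n)" then show "f x < M"
        by (smt (verit) divide_pos_pos of_nat_0_le_iff)
    next
      fix x assume "x \<in> S" "f x < M"
      then obtain n where "1 / (1 + real n) < M - f x"
        using reals_Archimedean[of "M - f x"] by (auto simp: add.commute inverse_eq_divide)
      then show "\<exists>n. f x \<le> M - 1 / (1 + real n)" by (intro exI[of _ n]) simp
    qed
    moreover have "F (M - 1 / Suc n) \<le> 1/2" for n
    proof (rule ccontr)
      assume "\<not> F (M - 1 / Suc n) \<le> 1/2"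
      then have "M - 1 / Suc n \<in> T" by (simp add: T_def)
      then have "M \<le> M - 1 / Suc n" unfolding M_def by (rule cInf_lower[OF _ Tbdd])
      then show False by simp
    qed
    ultimately show ?thesis
      by (intro LIMSEQ_le_const2[of "\<lambda>n. F (M - 1 / Suc n)"]) auto
  qed
  moreover have "{x\<in>S. f x \<ge> M} = space \<mu> - {x\<in>S. f x < M}" using sp by auto
  ultimately have "measure \<mu> {x\<in>S. f x \<ge> M} \<ge> 1/2"
    using prob_compl[OF lt[of M]] by simp
  then show ?thesis using FM unfolding is_median_def F_def S_def \<mu>_def by blast
qed


lemma conc_bdd:
  assumes X: "mm_space X"
  shows "bdd_above {measure (snd X) {x \<in> mspace (fst X). f x \<ge> M + \<epsilon>} | f M.
            f \<in> Lip1 (fst X) \<and> is_median X f M}"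
proof -
  interpret prob_space "snd X" using X by (simp add: mm_space_def)
  show ?thesis by (rule bdd_aboveI[of _ 1]) auto
qed

lemma conc_pos:
  assumes X: "mm_space X" and fs: "full_support X"
    and a: "a \<in> mspace (fst X)" and b: "b \<in> mspace (fst X)" and ab: "a \<noteq> b"
  shows "\<exists>\<epsilon>>0. conc_fun X \<epsilon> > 0"
proof -
  define m where "m = fst X"
  define \<mu> where "\<mu> = snd X"
  interpret prob_space \<mu> using X by (simp add: mm_space_def \<mu>_def)
  define f where "f = mdist m a"
  have fL: "f \<in> Lip1 m" unfolding Lip1_def f_def
  proof (intro CollectI ballI)
    fix x y assume "x \<in> mspace m" "y \<in> mspace m"
    then show "\<bar>mdist m a x - mdist m a y\<bar> \<le> mdist m x y"
      using mdist_triangle[of a m x y] mdist_triangle[of a m y x] a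
      by (auto simp: m_def mdist_commute abs_le_iff)
  qed
  obtain M where M: "is_median X f M" using median_exists[OF X] fL m_def by blast
  have fa: "f a = 0" using a by (simp add: f_def m_def)
  have fb: "f b > 0"
  proof -
    have "mdist m a b \<noteq> 0" using a b ab mdist_zero[of a m b] by (simp add: m_def)
    then show ?thesis using mdist_nonneg[of m a b] unfolding f_def by linarith
  qed
  obtain p where p: "p \<in> mspace m" "f p \<noteq> M"
    using a b fa fb m_def by (cases "M = 0") auto
  define r where "r = \<bar>f p - M\<bar> / 2"
  have r: "r > 0" using p by (simp add: r_def)
  have B: "measure \<mu> (mball_of m p r) > 0" using fs p r by (simp add: full_support_def m_def \<mu>_def)
  have near: "\<bar>f y - f p\<bar> < r" if "y \<in> mball_of m p r" for y
    using that fL p unfolding Lip1_def by (force simp: mdist_commute)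
  have "\<exists>g N. g \<in> Lip1 m \<and> is_median X g N \<and> measure \<mu> {x \<in> mspace m. g x \<ge> N + r} > 0"
  proof (cases "f p > M")
    case True
    have "mball_of m p r \<subseteq> {x \<in> mspace m. f x \<ge> M + r}"
    proof
      fix y assume y: "y \<in> mball_of m p r"
      have "\<bar>f y - f p\<bar> < r" using near[OF y] .
      moreover have "f p = M + 2 * r" using True by (simp add: r_def field_simps)
      ultimately have "f y \<ge> M + r" by arith
      then show "y \<in> {x \<in> mspace m. f x \<ge> M + r}" using y by auto
    qed
    then have "measure \<mu> (mball_of m p r) \<le> measure \<mu> {x \<in> mspace m. f x \<ge> M + r}"
      by (intro finite_measure_mono) (use Lip1_meas(2)[OF X] fL in \<open>auto simp: m_def \<mu>_def\<close>)
    then show ?thesis using B fL M by force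
  next
    case False
    then have lt: "f p < M" using p by simp
    define g where "g = (\<lambda>x. - f x)"
    have gL: "g \<in> Lip1 m" using Lip1_uminus[OF fL] by (simp add: g_def)
    have gM: "is_median X g (- M)" using M
      unfolding is_median_def g_def by simp
    have "mball_of m p r \<subseteq> {x \<in> mspace m. g x \<ge> - M + r}"
    proof
      fix y assume y: "y \<in> mball_of m p r"
      have "\<bar>f y - f p\<bar> < r" using near[OF y] .
      moreover have "M = f p + 2 * r" using lt by (simp add: r_def field_simps)
      ultimately have "g y \<ge> - M + r" unfolding g_def by arith
      then show "y \<in> {x \<in> mspace m. g x \<ge> - M + r}" using y by auto
    qed
    then have "measure \<mu> (mball_of m p r) \<le> measure \<mu> {x \<in> mspace m. g x \<ge> - M + r}"
      by (intro finite_measure_mono) (use Lip1_meas(2)[OF X] gL in \<open>auto simp: m_def \<mu>_def\<close>)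
    then show ?thesis using B gL gM by force
  qed
  then obtain g N where g: "g \<in> Lip1 m" "is_median X g N" "measure \<mu> {x \<in> mspace m. g x \<ge> N + r} > 0"
    by blast
  have "measure \<mu> {x \<in> mspace m. g x \<ge> N + r} \<le> conc_fun X r"
    unfolding conc_fun_def using r g
    by (auto simp: m_def \<mu>_def intro!: cSup_upper conc_bdd[OF X])
  then show ?thesis using r g by (intro exI[of _ r]) auto
qed

lemma conc_single:
  assumes X: "mm_space X" and S: "mspace (fst X) = {x0}" and e: "\<epsilon> > 0"
  shows "conc_fun X \<epsilon> = 0"
proof -
  define \<mu> where "\<mu> = snd X"
  interpret prob_space \<mu> using X by (simp add: mm_space_def \<mu>_def)
  have sp: "space \<mu> = {x0}" using X S by (simp add: mm_space_def \<mu>_def)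
  have "{measure (snd X) {x \<in> mspace (fst X). f x \<ge> M + \<epsilon>} | f M.
            f \<in> Lip1 (fst X) \<and> is_median X f M} = {0}"
  proof (intro equalityI subsetI)
    fix v assume "v \<in> {measure (snd X) {x \<in> mspace (fst X). f x \<ge> M + \<epsilon>} | f M.
            f \<in> Lip1 (fst X) \<and> is_median X f M}"
    then obtain f M where v: "v = measure \<mu> {x \<in> {x0}. f x \<ge> M + \<epsilon>}" and med: "is_median X f M"
      using S \<mu>_def by auto
    have 1: "measure \<mu> {x \<in> {x0}. f x \<ge> M} \<ge> 1/2" using med S by (simp add: is_median_def \<mu>_def)
    have "f x0 \<ge> M"
    proof (rule ccontr)
      assume "\<not> f x0 \<ge> M"
      then have e1: "{x \<in> {x0}. f x \<ge> M} = {}" by auto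
      from 1 show False unfolding e1 by simp
    qed
    then have "{x \<in> {x0}. f x \<ge> M + \<epsilon>} = {} \<or> f x0 > M" using e by auto
    have 2: "measure \<mu> {x \<in> {x0}. f x \<le> M} \<ge> 1/2" using med S by (simp add: is_median_def \<mu>_def)
    have "f x0 \<le> M"
    proof (rule ccontr)
      assume "\<not> f x0 \<le> M"
      then have e2: "{x \<in> {x0}. f x \<le> M} = {}" by auto
      from 2 show False unfolding e2 by simp
    qed
    then have e3: "{x \<in> {x0}. f x \<ge> M + \<epsilon>} = {}" using e by auto
    show "v \<in> {0}" using v unfolding e3 by simp
  next
    fix v :: real assume "v \<in> {0}"
    then have v: "v = 0" by simp
    have L: "(\<lambda>x. 0) \<in> Lip1 (fst X)" by (simp add: Lip1_def)
    have "{x \<in> mspace (fst X). (0::real) \<le> 0} = space \<mu>" using S sp by auto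
    then have "is_median X (\<lambda>x. 0) 0" unfolding is_median_def using prob_space by (simp add: \<mu>_def)
    moreover have "measure (snd X) {x \<in> mspace (fst X). (0::real) \<ge> 0 + \<epsilon>} = 0" using e by simp
    ultimately have "v = measure (snd X) {x \<in> mspace (fst X). (\<lambda>x. 0::real) x \<ge> 0 + \<epsilon>}
        \<and> (\<lambda>x. 0) \<in> Lip1 (fst X) \<and> is_median X (\<lambda>x. 0) 0" using L v by simp
    then show "v \<in> {measure (snd X) {x \<in> mspace (fst X). f x \<ge> M + \<epsilon>} | f M.
            f \<in> Lip1 (fst X) \<and> is_median X f M}"
      by (intro CollectI exI[of _ "\<lambda>x. 0::real"] exI[of _ "0::real"]) simp
  qed
  then show ?thesis using e by (simp add: conc_fun_def)
qed

theorem mainTheorem1: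
  fixes idim :: "'a mmspace \<Rightarrow> ennreal" and X :: "'a mmspace"
  assumes "intrinsic_dimension_function idim"
    and "mm_space X"
    and "full_support X"
  shows "idim X = \<infinity> \<longleftrightarrow> (\<exists>x. mspace (fst X) = {x})"
proof -
  have ax: "((\<lambda>n. idim X) \<longlonglongrightarrow> \<infinity>) \<longleftrightarrow> levy_family (\<lambda>n. X)"
  proof -
    have "\<forall>Xs. (\<forall>n. mm_space (Xs n)) \<longrightarrow>
        (((\<lambda>n. idim (Xs n)) \<longlonglongrightarrow> \<infinity>) \<longleftrightarrow> levy_family Xs)"
      using assms(1) unfolding intrinsic_dimension_function_def by (rule conjunct1)
    from this[rule_format, of "\<lambda>n. X"] show ?thesis using assms(2) by simp
  qed
  have 1: "idim X = \<infinity> \<longleftrightarrow> (\<forall>\<epsilon>>0. conc_fun X \<epsilon> = 0)"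
    using ax by (simp add: levy_family_def LIMSEQ_const_iff)
  interpret prob_space "snd X" using assms(2) by (simp add: mm_space_def)
  have ne: "mspace (fst X) \<noteq> {}" using assms(2) not_empty by (simp add: mm_space_def)
  show ?thesis
  proof
    assume "idim X = \<infinity>"
    then have z: "\<forall>\<epsilon>>0. conc_fun X \<epsilon> = 0" using 1 by simp
    show "\<exists>x. mspace (fst X) = {x}"
    proof (rule ccontr)
      assume "\<nexists>x. mspace (fst X) = {x}"
      then obtain a b where ab: "a \<in> mspace (fst X)" "b \<in> mspace (fst X)" "a \<noteq> b"
        using ne by blast
      obtain e where "e > 0" "conc_fun X e > 0" using conc_pos[OF assms(2,3) ab] by blast
      then show False using z by simp
    qed
  next
    assume "\<exists>x. mspace (fst X) = {x}"
    then show "idim X = \<infinity>" using 1 conc_single[OF assms(2)] by blast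
  qed
qed

end
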